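(* Let $\mathcal{F}=(V,\mathcal{E}\cup\mathcal{A})$ be a mixed hypergraph on a finite vertex set $V$, let $h$ be an integer-valued intersecting supermodular function on $V$, and let $b$ be a submodular function on $V$. Then there exists an orientation $\overrightarrow{\mathcal{E}}$ of $\mathcal{E}$ such that $$e_{\overrightarrow{\mathcal{E}}\cup\mathcal{A}}(\mathcal{P})\ \ge\ \sum_{X\in\mathcal{P}}h(X)-b(\cup\mathcal{P})\quad\text{for every subpartition }\mathcal{P}\text{ of }V$$ if and only if $$e_{\mathcal{E}\cup\mathcal{A}}(\mathcal{P})\ \ge\ \sum_{X\in\mathcal{P}}h(X)-b(\cup\mathcal{P})\quad\text{for every subpartition }\mathcal{P}\text{ of }V.$$
   Context: A mixed hypergraph $\mathcal{F}=(V,\mathcal{E}\cup\mathcal{A})$ consists of a vertex set $V$, a (multi)set $\mathcal{E}$ of hyperedges, each a subset of $V$ of size at least two, and a (multi)set $\mathcal{A}$ of dyperedges, each an ordered pair $(Z,z)$ with $z\in V$ (the head) and $Z$ a non-empty subset of $V-z$ (the tails). A hyperedge $X$ enters a set $Y\subseteq V$ if $X\cap Y\neq\emptyset\neq X\setminus Y$; a dyperedge $(Z,z)$ enters $Y$ if $z\in Y$ and $Z\setminus Y\neq\emptyset$. Orienting a hyperedge $X$ means replacing it by a dyperedge $(X-x,x)$ for some $x\in X$; an orientation $\overrightarrow{\mathcal{E}}$ of $\mathcal{E}$ orients every hyperedge of $\mathcal{E}$. A subpartition of $V$ is a set of pairwise disjoint subsets of $V$; for a subpartition $\mathcal{P}$,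 $\cup\mathcal{P}$ denotes the union of its members, and $e_{\mathcal{E}\cup\mathcal{A}}(\mathcal{P})$ denotes the number of hyperedges in $\mathcal{E}$ and dyperedges in $\mathcal{A}$ that enter some member of $\mathcal{P}$ (similarly for $e_{\overrightarrow{\mathcal{E}}\cup\mathcal{A}}$, counting only dyperedges). A set function $h$ on $V$ (defined on subsets of $V$) is intersecting supermodular if $h(X)+h(Y)\le h(X\cup Y)+h(X\cap Y)$ for all $X,Y\subseteq V$ with $X\cap Y\neq\emptyset$; a set function $b$ on $V$ is submodular if $b(X)+b(Y)\ge b(X\cup Y)+b(X\cap Y)$ for all $X,Y\subseteq V$. *)

theory Defs
  imports Main "HOL-Library.Multiset"
begin

text \<open>Hyperedges are sets of vertices; dyperedges are pairs (Z, z) of tail set and head.\<close>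

definition mixed_hypergraph :: "'a set \<Rightarrow> 'a set multiset \<Rightarrow> ('a set \<times> 'a) multiset \<Rightarrow> bool" where
  "mixed_hypergraph V E A \<longleftrightarrow>
     (\<forall>X \<in># E. X \<subseteq> V \<and> card X \<ge> 2) \<and>
     (\<forall>(Z, z) \<in># A. z \<in> V \<and> Z \<subseteq> V - {z} \<and> Z \<noteq> {})"

definition hyperedge_enters :: "'a set \<Rightarrow> 'a set \<Rightarrow> bool" where
  "hyperedge_enters X Y \<longleftrightarrow> X \<inter> Y \<noteq> {} \<and> X - Y \<noteq> {}"

definition dyperedge_enters :: "'a set \<times> 'a \<Rightarrow> 'a set \<Rightarrow> bool" where
  "dyperedge_enters d Y \<longleftrightarrow> snd d \<in> Y \<and> fst d - Y \<noteq> {}"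

definition is_orientation :: "'a set multiset \<Rightarrow> ('a set \<times> 'a) multiset \<Rightarrow> bool" where
  "is_orientation E D \<longleftrightarrow>
     (\<exists>M :: ('a set \<times> 'a) multiset.
        image_mset fst M = E \<and> (\<forall>(X, x) \<in># M. x \<in> X) \<and>
        D = image_mset (\<lambda>(X, x). (X - {x}, x)) M)"

definition subpartition :: "'a set \<Rightarrow> 'a set set \<Rightarrow> bool" where
  "subpartition V P \<longleftrightarrow> (\<forall>X \<in> P. X \<subseteq> V) \<and>
     (\<forall>X \<in> P. \<forall>Y \<in> P. X \<noteq> Y \<longrightarrow> X \<inter> Y = {})"

definition e_count :: "'a set multiset \<Rightarrow> ('a set \<times> 'a) multiset \<Rightarrow> 'a set set \<Rightarrow> nat" where
  "e_count E A P = size (filter_mset (\<lambda>X. \<exists>Y \<in> P. hyperedge_enters X Y) E)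
                 + size (filter_mset (\<lambda>d. \<exists>Y \<in> P. dyperedge_enters d Y) A)"

definition intersecting_supermodular :: "'a set \<Rightarrow> ('a set \<Rightarrow> int) \<Rightarrow> bool" where
  "intersecting_supermodular V h \<longleftrightarrow>
     (\<forall>X Y. X \<subseteq> V \<and> Y \<subseteq> V \<and> X \<inter> Y \<noteq> {} \<longrightarrow> h X + h Y \<le> h (X \<union> Y) + h (X \<inter> Y))"

definition submodular :: "'a set \<Rightarrow> ('a set \<Rightarrow> int) \<Rightarrow> bool" where
  "submodular V b \<longleftrightarrow>
     (\<forall>X Y. X \<subseteq> V \<and> Y \<subseteq> V \<longrightarrow> b X + b Y \<ge> b (X \<union> Y) + b (X \<inter> Y))"

end

theory Submission
  imports Defs
begin

definition cov :: "'a set multiset \<Rightarrow> 'a \<Rightarrow> nat" where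
  "cov F v = size (filter_mset (\<lambda>X. v \<in> X) F)"

lemma cov_plus[simp]: "cov (F + G) v = cov F v + cov G v"
  by (simp add: cov_def)

lemma cov_ge2:
  assumes "{#X, Y#} \<subseteq># F" "v \<in> X" "v \<in> Y"
  shows "cov F v \<ge> 2"
proof -
  have "{#X, Y#} \<subseteq># filter_mset (\<lambda>X. v \<in> X) F"
    using multiset_filter_mono[OF assms(1), of "\<lambda>X. v \<in> X"] assms(2,3) by simp
  from size_mset_mono[OF this] show ?thesis by (simp add: cov_def)
qed

lemma cov_ge1:
  assumes "X \<in># F" "v \<in> X"
  shows "cov F v \<ge> 1"
proof -
  have "X \<in># filter_mset (\<lambda>X. v \<in> X) F" using assms by simp
  then have "filter_mset (\<lambda>X. v \<in> X) F \<noteq> {#}" by (metis empty_iff set_mset_empty)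
  then show ?thesis unfolding cov_def by (metis One_nat_def Suc_leI nonempty_has_size)
qed

lemma pair_sub_distinct:
  assumes "X \<in># F" "Y \<in># F" "X \<noteq> Y"
  shows "{#X, Y#} \<subseteq># F"
proof -
  obtain F1 where F1: "F = add_mset X F1" using assms(1) by (metis multi_member_split)
  then have "Y \<in># F1" using assms(2,3) by auto
  then obtain F2 where "F1 = add_mset Y F2" by (metis multi_member_split)
  then show ?thesis using F1 by simp
qed

lemma extract_lam:
  assumes fin: "\<forall>X\<in>#F. finite X \<and> X \<noteq> {}"
    and lam: "\<forall>X Y. {#X, Y#} \<subseteq># F \<longrightarrow> X \<inter> Y = {} \<or> X \<subseteq> Y \<or> Y \<subseteq> X"
    and c2: "\<forall>v. cov F v \<le> 2"
  shows "\<exists>P Q. F = mset_set P + mset_set Q \<and> finite P \<and> finite Q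
     \<and> (\<forall>X\<in>P. \<forall>Y\<in>P. X \<noteq> Y \<longrightarrow> X \<inter> Y = {})
     \<and> (\<forall>X\<in>Q. \<forall>Y\<in>Q. X \<noteq> Y \<longrightarrow> X \<inter> Y = {}) \<and> \<Union>Q \<subseteq> \<Union>P"
proof -
  define Mx where "Mx = {X \<in> set_mset F. \<forall>Y\<in>set_mset F. X \<subseteq> Y \<longrightarrow> Y = X}"
  have finMx: "finite Mx" unfolding Mx_def by auto
  have sub: "mset_set Mx \<subseteq># F"
    unfolding subseteq_mset_def
  proof
    fix X show "count (mset_set Mx) X \<le> count F X"
      using finMx by (cases "X \<in> Mx") (auto simp: Mx_def count_eq_zero_iff)
  qed
  define G where "G = F - mset_set Mx"
  have FG: "F = mset_set Mx + G" unfolding G_def using sub by simp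
  have above: "\<exists>M\<in>Mx. X \<subseteq> M" if "X \<in># F" for X
  proof -
    have f1: "finite {Y \<in> set_mset F. X \<subseteq> Y}" by auto
    have f2: "{Y \<in> set_mset F. X \<subseteq> Y} \<noteq> {}" using that by auto
    obtain m where m: "m \<in> {Y \<in> set_mset F. X \<subseteq> Y}"
      "\<forall>b\<in>{Y \<in> set_mset F. X \<subseteq> Y}. m \<le> b \<longrightarrow> m = b"
      using finite_has_maximal[OF f1 f2] by blast
    have "m \<in> Mx" unfolding Mx_def using m by auto
    then show ?thesis using m by auto
  qed
  have disjMx: "X \<inter> Y = {}" if "X \<in> Mx" "Y \<in> Mx" "X \<noteq> Y" for X Y
  proof -
    have "X \<in># F" "Y \<in># F" using that unfolding Mx_def by auto
    then have "{#X, Y#} \<subseteq># F" using pair_sub_distinct that(3) by metis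
    then have "X \<inter> Y = {} \<or> X \<subseteq> Y \<or> Y \<subseteq> X" using lam by blast
    then show ?thesis using that unfolding Mx_def by auto
  qed
  have covG: "cov G v \<le> 1" for v
  proof (rule ccontr)
    assume "\<not> cov G v \<le> 1"
    then have "cov G v \<ge> 1" by simp
    then have "filter_mset (\<lambda>X. v \<in> X) G \<noteq> {#}" unfolding cov_def by (metis not_one_le_zero size_empty)
    then obtain X where "X \<in># filter_mset (\<lambda>X. v \<in> X) G" by blast
    then have "X \<in># G" "v \<in> X" by auto
    then have "X \<in># F" using FG by simp
    then obtain M where "M \<in> Mx" "X \<subseteq> M" using above by blast
    then have "M \<in># mset_set Mx" "v \<in> M" using finMx \<open>v \<in> X\<close> by auto
    then have "cov (mset_set Mx) v \<ge> 1" by (rule cov_ge1)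
    then show False using c2[rule_format, of v] \<open>\<not> cov G v \<le> 1\<close> FG by simp
  qed
  have Gne: "X \<noteq> {}" if "X \<in># G" for X using that fin FG by auto
  have cnt: "count G X \<le> 1" for X
  proof (rule ccontr)
    assume a: "\<not> count G X \<le> 1"
    then have "0 < count G X" by linarith
    then have "X \<in># G" by simp
    then obtain v where "v \<in> X" using Gne by blast
    have "{#X, X#} \<subseteq># G" using a by (simp add: subseteq_mset_def)
    then have "cov G v \<ge> 2" by (rule cov_ge2[OF _ \<open>v \<in> X\<close> \<open>v \<in> X\<close>])
    then show False using covG[of v] by simp
  qed
  have Gset: "G = mset_set (set_mset G)"
  proof (rule multiset_eqI)
    fix X
    show "count G X = count (mset_set (set_mset G)) X"
    proof (cases "X \<in># G")
      case True
      then have "0 < count G X" by simp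
      then have "count G X = 1" using cnt[of X] by linarith
      then show ?thesis using True by simp
    next
      case False
      then show ?thesis by (simp add: not_in_iff)
    qed
  qed
  have disjG: "X \<inter> Y = {}" if "X \<in># G" "Y \<in># G" "X \<noteq> Y" for X Y
  proof (rule ccontr)
    assume "X \<inter> Y \<noteq> {}"
    then obtain v where "v \<in> X" "v \<in> Y" by blast
    have "{#X, Y#} \<subseteq># G" using pair_sub_distinct[OF that] .
    then have "cov G v \<ge> 2" by (rule cov_ge2[OF _ \<open>v \<in> X\<close> \<open>v \<in> Y\<close>])
    then show False using covG[of v] by simp
  qed
  have "\<Union>(set_mset G) \<subseteq> \<Union>Mx" using above FG by fastforce
  then show ?thesis using FG Gset disjMx disjG finMx
    by (intro exI[of _ Mx] exI[of _ "set_mset G"]) auto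
qed

definition hs :: "('a set \<Rightarrow> int) \<Rightarrow> 'a set multiset \<Rightarrow> int" where
  "hs h F = sum_mset (image_mset h F)"
definition Nc :: "'a set \<Rightarrow> 'a set multiset \<Rightarrow> nat" where
  "Nc e F = size (filter_mset (\<lambda>X. e \<subseteq> X) F)"
definition Dc :: "'a set \<times> 'a \<Rightarrow> 'a set multiset \<Rightarrow> nat" where
  "Dc d F = size (filter_mset (\<lambda>X. dyperedge_enters d X) F)"
definition mu :: "'a set multiset \<Rightarrow> nat" where
  "mu F = sum_mset (image_mset (\<lambda>X. card X ^ 2) F)"

definition Inv :: "'a set \<Rightarrow> ('a set \<Rightarrow> int) \<Rightarrow> 'a set multiset \<Rightarrow> 'a set multiset \<Rightarrow> bool" where
  "Inv V h F0 F \<longleftrightarrow> set_mset F \<subseteq> Pow V - {{}} \<and> size F = size F0 \<and> (\<forall>v. cov F v = cov F0 v)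
     \<and> hs h F0 \<le> hs h F \<and> (\<forall>e. Nc e F0 \<le> Nc e F) \<and> (\<forall>d. Dc d F \<le> Dc d F0)"

lemma dent_sub:
  "(if dyperedge_enters d (X \<union> Y) then 1 else 0) + (if dyperedge_enters d (X \<inter> Y) then 1 else 0)
   \<le> (if dyperedge_enters d X then 1 else (0::nat)) + (if dyperedge_enters d Y then 1 else 0)"
  unfolding dyperedge_enters_def by auto

lemma card_sq:
  assumes "finite X" "finite Y" "\<not> X \<subseteq> Y" "\<not> Y \<subseteq> X"
  shows "card X ^ 2 + card Y ^ 2 < card (X \<union> Y) ^ 2 + card (X \<inter> Y) ^ 2"
proof -
  have e: "card X + card Y = card (X \<union> Y) + card (X \<inter> Y)" using card_Un_Int assms(1,2) by blast
  have "X \<inter> Y \<subset> X" using assms(3) by blast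
  then have l1: "card (X \<inter> Y) < card X" using psubset_card_mono assms(1) by blast
  have "X \<inter> Y \<subset> Y" using assms(4) by blast
  then have l2: "card (X \<inter> Y) < card Y" using psubset_card_mono assms(2) by blast
  define a where "a = int (card X)" define b where "b = int (card Y)" define t where "t = int (card (X \<inter> Y))"
  define s where "s = int (card (X \<union> Y))"
  have S: "s = a + b - t" using e unfolding a_def b_def s_def t_def by simp
  have lt: "t < a" "t < b" using l1 l2 unfolding a_def b_def t_def by auto
  have "s*s + t*t - a*a - b*b = 2*((a-t)*(b-t))" unfolding S by (simp add: algebra_simps)
  moreover have "0 < (a-t)*(b-t)" using lt by simp
  ultimately have "a^2 + b^2 < s^2 + t^2" by (simp add: power2_eq_square)
  then have "int (card X ^ 2 + card Y ^ 2) < int (card (X \<union> Y) ^ 2 + card (X \<inter> Y) ^ 2)"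
    unfolding a_def b_def s_def t_def by simp
  then show ?thesis by linarith
qed
lemma uncross_step:
  assumes inv: "Inv V h F0 (G + {#X, Y#})" and finV: "finite V"
    and sup: "intersecting_supermodular V h"
    and cr: "X \<inter> Y \<noteq> {}" "\<not> X \<subseteq> Y" "\<not> Y \<subseteq> X"
  shows "Inv V h F0 (G + {#X \<union> Y, X \<inter> Y#}) \<and> mu (G + {#X, Y#}) < mu (G + {#X \<union> Y, X \<inter> Y#})"
proof -
  have XV: "X \<subseteq> V" "Y \<subseteq> V" using inv unfolding Inv_def by auto
  have hh: "h X + h Y \<le> h (X \<union> Y) + h (X \<inter> Y)" using sup XV cr(1) unfolding intersecting_supermodular_def by blast
  have fin: "finite X" "finite Y" using XV finV finite_subset by auto
  have "Inv V h F0 (G + {#X \<union> Y, X \<inter> Y#})"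
    unfolding Inv_def
  proof (intro conjI allI)
    show "set_mset (G + {#X \<union> Y, X \<inter> Y#}) \<subseteq> Pow V - {{}}" using inv cr(1) unfolding Inv_def by auto
    show "size (G + {#X \<union> Y, X \<inter> Y#}) = size F0" using inv unfolding Inv_def by simp
    fix v have "cov (G + {#X, Y#}) v = cov F0 v" using inv unfolding Inv_def by blast
    then show "cov (G + {#X \<union> Y, X \<inter> Y#}) v = cov F0 v" unfolding cov_def by (simp split: if_splits)
  next
    show "hs h F0 \<le> hs h (G + {#X \<union> Y, X \<inter> Y#})" using inv hh unfolding Inv_def hs_def by simp
  next
    fix e have "Nc e F0 \<le> Nc e (G + {#X, Y#})" using inv unfolding Inv_def by blast
    then show "Nc e F0 \<le> Nc e (G + {#X \<union> Y, X \<inter> Y#})" unfolding Nc_def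
      by (simp split: if_splits; blast)
  next
    fix d have "Dc d (G + {#X, Y#}) \<le> Dc d F0" using inv unfolding Inv_def by blast
    then show "Dc d (G + {#X \<union> Y, X \<inter> Y#}) \<le> Dc d F0" using dent_sub[of d X Y] unfolding Dc_def
      by (simp split: if_splits)
  qed
  moreover have "mu (G + {#X, Y#}) < mu (G + {#X \<union> Y, X \<inter> Y#})"
    using card_sq[OF fin cr(2,3)] unfolding mu_def by simp
  ultimately show ?thesis by blast
qed

lemma mu_bound:
  assumes "finite V" "set_mset F \<subseteq> Pow V"
  shows "mu F \<le> size F * card V ^ 2"
  using assms(2)
proof (induction F)
  case empty then show ?case by (simp add: mu_def)
next
  case (add x F)
  have "card x \<le> card V" using add.prems assms(1) by (simp add: card_mono)
  then have sq: "card x ^ 2 \<le> card V ^ 2" by (simp add: power_mono)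
  have IH: "mu F \<le> size F * card V ^ 2" using add by simp
  have "mu (add_mset x F) = card x ^ 2 + mu F" by (simp add: mu_def)
  then show ?case using add_mono[OF sq IH] by simp
qed

lemma laminar_exists:
  assumes finV: "finite V" and F0: "set_mset F0 \<subseteq> Pow V - {{}}"
    and sup: "intersecting_supermodular V h"
  shows "\<exists>F. Inv V h F0 F \<and> (\<forall>X Y. {#X, Y#} \<subseteq># F \<longrightarrow> X \<inter> Y = {} \<or> X \<subseteq> Y \<or> Y \<subseteq> X)"
proof -
  have i0: "Inv V h F0 F0" using F0 unfolding Inv_def by auto
  have bnd: "\<forall>F. Inv V h F0 F \<longrightarrow> mu F < size F0 * card V ^ 2 + 1"
  proof (intro allI impI)
    fix F assume "Inv V h F0 F"
    then have "set_mset F \<subseteq> Pow V" "size F = size F0" unfolding Inv_def by auto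
    then show "mu F < size F0 * card V ^ 2 + 1" using mu_bound[OF finV, of F] by simp
  qed
  obtain F where F: "Inv V h F0 F" and mx: "\<forall>F'. Inv V h F0 F' \<longrightarrow> mu F' \<le> mu F"
    using Lattices_Big.ex_has_greatest_nat[of "Inv V h F0" F0 mu, OF i0 bnd] by metis
  have "X \<inter> Y = {} \<or> X \<subseteq> Y \<or> Y \<subseteq> X" if s: "{#X, Y#} \<subseteq># F" for X Y
  proof (rule ccontr)
    assume c: "\<not> (X \<inter> Y = {} \<or> X \<subseteq> Y \<or> Y \<subseteq> X)"
    define G where "G = F - {#X, Y#}"
    have FG: "F = G + {#X, Y#}" unfolding G_def using subset_mset.diff_add[OF s, symmetric] .
    have "Inv V h F0 (G + {#X \<union> Y, X \<inter> Y#}) \<and> mu (G + {#X, Y#}) < mu (G + {#X \<union> Y, X \<inter> Y#})"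
    proof (rule uncross_step[OF _ finV sup])
      show "Inv V h F0 (G + {#X, Y#})" using F FG by simp
    qed (use c in auto)
    then show False using mx FG by (metis not_le)
  qed
  then show ?thesis using F by blast
qed

lemma size_filter_unique:
  assumes "finite P" "\<forall>X\<in>P. \<forall>Y\<in>P. p X \<longrightarrow> p Y \<longrightarrow> X = Y"
  shows "size (filter_mset p (mset_set P)) = (if \<exists>X\<in>P. p X then 1 else 0)"
proof (cases "\<exists>X\<in>P. p X")
  case True
  then obtain X0 where X0: "X0 \<in> P" "p X0" by blast
  then have "{X \<in> P. p X} = {X0}" using assms(2) by blast
  then show ?thesis using assms(1) True by simp
next
  case False
  then have "{X \<in> P. p X} = {}" by blast
  then show ?thesis using assms(1) False by simp
qed

definition HE :: "'a set \<Rightarrow> 'a set set \<Rightarrow> int" where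
  "HE e P = (if \<exists>Y\<in>P. hyperedge_enters e Y then 1 else 0)"
definition DE :: "'a set \<times> 'a \<Rightarrow> 'a set set \<Rightarrow> int" where
  "DE d P = (if \<exists>Y\<in>P. dyperedge_enters d Y then 1 else 0)"

lemma sp_cov:
  assumes "finite P" "\<forall>X\<in>P. \<forall>Y\<in>P. X \<noteq> Y \<longrightarrow> X \<inter> Y = {}"
  shows "cov (mset_set P) v = (if v \<in> \<Union>P then 1 else 0)"
proof -
  have "size (filter_mset (\<lambda>X. v \<in> X) (mset_set P)) = (if \<exists>X\<in>P. v \<in> X then 1 else 0)"
    by (rule size_filter_unique[OF assms(1)]) (use assms(2) in blast)
  then show ?thesis unfolding cov_def by auto
qed

lemma sp_Nc:
  assumes "finite P" "\<forall>X\<in>P. \<forall>Y\<in>P. X \<noteq> Y \<longrightarrow> X \<inter> Y = {}" "e \<noteq> {}"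
  shows "Nc e (mset_set P) = (if \<exists>X\<in>P. e \<subseteq> X then 1 else 0)"
  unfolding Nc_def
  by (rule size_filter_unique[OF assms(1)]) (use assms(2,3) in blast)

lemma sp_Dc:
  assumes "finite P" "\<forall>X\<in>P. \<forall>Y\<in>P. X \<noteq> Y \<longrightarrow> X \<inter> Y = {}"
  shows "int (Dc d (mset_set P)) = DE d P"
proof -
  have "Dc d (mset_set P) = (if \<exists>X\<in>P. dyperedge_enters d X then 1 else 0)"
    unfolding Dc_def
    by (rule size_filter_unique[OF assms(1)]) (use assms(2) in \<open>auto simp: dyperedge_enters_def\<close>)
  then show ?thesis unfolding DE_def by simp
qed

lemma sp_HE:
  assumes "finite P" "\<forall>X\<in>P. \<forall>Y\<in>P. X \<noteq> Y \<longrightarrow> X \<inter> Y = {}" "e \<noteq> {}"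
  shows "HE e P = (if e \<inter> \<Union>P \<noteq> {} then 1 else 0) - int (Nc e (mset_set P))"
proof (cases "\<exists>X\<in>P. e \<subseteq> X")
  case True
  then obtain X where X: "X \<in> P" "e \<subseteq> X" by blast
  have "\<not> hyperedge_enters e Y" if "Y \<in> P" for Y
  proof (cases "Y = X")
    case True then show ?thesis using X unfolding hyperedge_enters_def by auto
  next
    case False then have "X \<inter> Y = {}" using assms(2) X that by blast
    then show ?thesis using X unfolding hyperedge_enters_def by auto
  qed
  moreover have "e \<inter> \<Union>P \<noteq> {}" using X assms(3) by blast
  ultimately show ?thesis using sp_Nc[OF assms] True unfolding HE_def by auto
next
  case False
  have "(\<exists>Y\<in>P. hyperedge_enters e Y) \<longleftrightarrow> e \<inter> \<Union>P \<noteq> {}"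
    using False unfolding hyperedge_enters_def by auto
  then show ?thesis using sp_Nc[OF assms] False unfolding HE_def by auto
qed

lemma hs_mset_set: "hs h (mset_set P) = sum h P"
  unfolding hs_def by (simp add: sum_unfold_sum_mset)

lemma bool_count:
  "(if a' then 1 else 0) + (if b' then 1 else 0) = (if a then 1 else (0::nat)) + (if b then 1 else 0)
   \<Longrightarrow> (b' \<longrightarrow> a') \<Longrightarrow> (a' \<longleftrightarrow> a \<or> b) \<and> (b' \<longleftrightarrow> a \<and> b)"
  by (cases a; cases b; cases a'; cases b') auto

lemma uncross_sp:
  assumes finV: "finite V" and P: "subpartition V P" and Q: "subpartition V Q"
    and Pe: "{} \<notin> P" and Qe: "{} \<notin> Q" and sup: "intersecting_supermodular V h"
  shows "\<exists>P' Q'. subpartition V P' \<and> subpartition V Q' \<and> {} \<notin> P' \<and> {} \<notin> Q'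
     \<and> \<Union>P' = \<Union>P \<union> \<Union>Q \<and> \<Union>Q' = \<Union>P \<inter> \<Union>Q
     \<and> sum h P + sum h Q \<le> sum h P' + sum h Q'
     \<and> (\<forall>e. HE e P' + HE e Q' \<le> HE e P + HE e Q)
     \<and> (\<forall>d. DE d P' + DE d Q' \<le> DE d P + DE d Q)"
proof -
  have finP: "finite P" using P finV unfolding subpartition_def
    by (meson Pow_iff finite_Pow_iff rev_finite_subset subsetI)
  have finQ: "finite Q" using Q finV unfolding subpartition_def
    by (meson Pow_iff finite_Pow_iff rev_finite_subset subsetI)
  have dP: "\<forall>X\<in>P. \<forall>Y\<in>P. X \<noteq> Y \<longrightarrow> X \<inter> Y = {}" using P unfolding subpartition_def by blast
  have dQ: "\<forall>X\<in>Q. \<forall>Y\<in>Q. X \<noteq> Y \<longrightarrow> X \<inter> Y = {}" using Q unfolding subpartition_def by blast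
  define F0 where "F0 = mset_set P + mset_set Q"
  have F0s: "set_mset F0 \<subseteq> Pow V - {{}}" unfolding F0_def using finP finQ P Q Pe Qe
    unfolding subpartition_def by auto
  obtain F where F: "Inv V h F0 F" and lam: "\<forall>X Y. {#X, Y#} \<subseteq># F \<longrightarrow> X \<inter> Y = {} \<or> X \<subseteq> Y \<or> Y \<subseteq> X"
    using laminar_exists[OF finV F0s sup] by blast
  have Fs: "set_mset F \<subseteq> Pow V - {{}}" using F unfolding Inv_def by blast
  have covF: "cov F v = cov F0 v" for v using F unfolding Inv_def by blast
  have cov0: "cov F0 v = (if v \<in> \<Union>P then 1 else 0) + (if v \<in> \<Union>Q then 1 else 0)" for v
    unfolding F0_def using sp_cov[OF finP dP] sp_cov[OF finQ dQ] by simp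
  have fin1: "\<forall>X\<in>#F. finite X \<and> X \<noteq> {}"
  proof
    fix X assume "X \<in># F"
    then have "X \<subseteq> V" "X \<noteq> {}" using Fs by auto
    then show "finite X \<and> X \<noteq> {}" using finite_subset finV by auto
  qed
  have c2: "\<forall>v. cov F v \<le> 2" using covF cov0 by simp
  obtain P' Q' where PQ: "F = mset_set P' + mset_set Q'" "finite P'" "finite Q'"
     and dP': "\<forall>X\<in>P'. \<forall>Y\<in>P'. X \<noteq> Y \<longrightarrow> X \<inter> Y = {}"
     and dQ': "\<forall>X\<in>Q'. \<forall>Y\<in>Q'. X \<noteq> Y \<longrightarrow> X \<inter> Y = {}" and QP: "\<Union>Q' \<subseteq> \<Union>P'"
    using extract_lam[OF fin1 lam c2] by (elim exE conjE) (erule that, assumption+)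
  have "set_mset (mset_set P' + mset_set Q') \<subseteq> Pow V - {{}}" using Fs unfolding PQ(1) .
  then have P's: "P' \<subseteq> Pow V - {{}}" "Q' \<subseteq> Pow V - {{}}" using PQ(2,3) by auto
  have sP': "subpartition V P'" "subpartition V Q'" using P's dP' dQ' unfolding subpartition_def by auto
  have covF': "cov F v = (if v \<in> \<Union>P' then 1 else 0) + (if v \<in> \<Union>Q' then 1 else 0)" for v
    unfolding PQ(1) using sp_cov[OF PQ(2) dP'] sp_cov[OF PQ(3) dQ'] by simp
  have cnt: "(if v \<in> \<Union>P' then 1 else 0) + (if v \<in> \<Union>Q' then 1 else 0)
     = (if v \<in> \<Union>P then 1 else (0::nat)) + (if v \<in> \<Union>Q then 1 else 0)" for v
    using covF'[of v] covF[of v] cov0[of v] by simp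
  have imp: "v \<in> \<Union>Q' \<longrightarrow> v \<in> \<Union>P'" for v using QP by blast
  have U1: "\<Union>P' = \<Union>P \<union> \<Union>Q"
  proof (intro set_eqI)
    fix v show "v \<in> \<Union>P' \<longleftrightarrow> v \<in> \<Union>P \<union> \<Union>Q"
      unfolding Un_iff by (rule conjunct1[OF bool_count[OF cnt[of v] imp[of v]]])
  qed
  have U2: "\<Union>Q' = \<Union>P \<inter> \<Union>Q"
  proof (intro set_eqI)
    fix v show "v \<in> \<Union>Q' \<longleftrightarrow> v \<in> \<Union>P \<inter> \<Union>Q"
      unfolding Int_iff by (rule conjunct2[OF bool_count[OF cnt[of v] imp[of v]]])
  qed
  have hsum: "sum h P + sum h Q \<le> sum h P' + sum h Q'"
    using F unfolding Inv_def F0_def PQ(1) hs_def by (simp add: sum_unfold_sum_mset)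
  have HEs: "HE e P' + HE e Q' \<le> HE e P + HE e Q" for e
  proof (cases "e = {}")
    case True then show ?thesis unfolding HE_def hyperedge_enters_def by simp
  next
    case False
    have "Nc e F0 \<le> Nc e F" using F unfolding Inv_def by blast
    then have N: "int (Nc e (mset_set P)) + int (Nc e (mset_set Q)) \<le> int (Nc e (mset_set P')) + int (Nc e (mset_set Q'))"
      unfolding F0_def PQ(1) Nc_def by simp
    show ?thesis
      unfolding sp_HE[OF finP dP False] sp_HE[OF finQ dQ False] sp_HE[OF PQ(2) dP' False] sp_HE[OF PQ(3) dQ' False] U1 U2
      using N by (auto split: if_splits)
  qed
  have DEs: "DE d P' + DE d Q' \<le> DE d P + DE d Q" for d
  proof -
    have "Dc d F \<le> Dc d F0" using F unfolding Inv_def by blast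
    then have "int (Dc d (mset_set P')) + int (Dc d (mset_set Q')) \<le> int (Dc d (mset_set P)) + int (Dc d (mset_set Q))"
      unfolding F0_def PQ(1) Dc_def by simp
    then show ?thesis using sp_Dc[OF finP dP] sp_Dc[OF finQ dQ] sp_Dc[OF PQ(2) dP'] sp_Dc[OF PQ(3) dQ'] by simp
  qed
  have ne: "{} \<notin> P'" "{} \<notin> Q'" using P's by auto
  show ?thesis
    by (rule exI[of _ P'], rule exI[of _ Q'], intro conjI allI sP' ne U1 U2 hsum HEs DEs)
qed

lemma size_filter_sum: "int (size (filter_mset p M)) = sum_mset (image_mset (\<lambda>x. if p x then 1 else 0) M)"
  by (induction M) auto

lemma ec_sum: "int (e_count E A P) = sum_mset (image_mset (\<lambda>e. HE e P) E) + sum_mset (image_mset (\<lambda>d. DE d P) A)"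
  unfolding e_count_def HE_def DE_def by (simp add: size_filter_sum)

lemma ec_uncross:
  assumes "\<forall>e. HE e P' + HE e Q' \<le> HE e P + HE e Q" "\<forall>d. DE d P' + DE d Q' \<le> DE d P + DE d Q"
  shows "int (e_count E A P') + int (e_count E A Q') \<le> int (e_count E A P) + int (e_count E A Q)"
proof -
  have 1: "sum_mset (image_mset (\<lambda>e. HE e P' + HE e Q') E) \<le> sum_mset (image_mset (\<lambda>e. HE e P + HE e Q) E)"
    by (rule sum_mset_mono) (use assms(1) in blast)
  have 2: "sum_mset (image_mset (\<lambda>d. DE d P' + DE d Q') A) \<le> sum_mset (image_mset (\<lambda>d. DE d P + DE d Q) A)"
    by (rule sum_mset_mono) (use assms(2) in blast)
  show ?thesis using 1 2 unfolding ec_sum sum_mset.distrib by simp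
qed

lemma HE_01: "HE e P = 0 \<or> HE e P = 1" unfolding HE_def by simp
lemma DE_01: "DE e P = 0 \<or> DE e P = 1" unfolding DE_def by simp

lemma ec_empty_set: "e_count E A (P - {{}}) = e_count E A P"
proof -
  have "(\<exists>Y\<in>P - {{}}. hyperedge_enters X Y) = (\<exists>Y\<in>P. hyperedge_enters X Y)" for X
    unfolding hyperedge_enters_def by blast
  moreover have "(\<exists>Y\<in>P - {{}}. dyperedge_enters X Y) = (\<exists>Y\<in>P. dyperedge_enters X Y)" for X
    unfolding dyperedge_enters_def by blast
  ultimately show ?thesis unfolding e_count_def by simp
qed

lemma ec_add_E: "int (e_count (E + {#X#}) A P) = int (e_count E A P) + HE X P"
  unfolding e_count_def HE_def by simp
lemma ec_add_A: "int (e_count E (A + {#d#}) P) = int (e_count E A P) + DE d P"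
  unfolding e_count_def DE_def by simp

lemma sp_finite: "finite V \<Longrightarrow> subpartition V P \<Longrightarrow> finite P"
  unfolding subpartition_def by (meson Pow_iff finite_Pow_iff rev_finite_subset subsetI)

lemma orient_step:
  assumes finV: "finite V" and sup: "intersecting_supermodular V h" and sub: "submodular V b"
    and finX: "finite X" and Xne: "X \<noteq> {}"
    and cond: "\<forall>P. subpartition V P \<longrightarrow> int (e_count (E + {#X#}) A P) \<ge> sum h P - b (\<Union>P)"
  shows "\<exists>x\<in>X. \<forall>P. subpartition V P \<longrightarrow> int (e_count E (A + {#(X - {x}, x)#}) P) \<ge> sum h P - b (\<Union>P)"
proof (rule ccontr)
  assume neg: "\<not> ?thesis"
  define c where "c = max 0 (h {})"
  define s where "s = (\<lambda>P. int (e_count E A P) - sum h P + b (\<Union>P))"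
  have a: "s P + HE X P \<ge> c" if P: "subpartition V P" "{} \<notin> P" for P
  proof -
    have finP: "finite P" using sp_finite[OF finV P(1)] .
    have 1: "s P + HE X P \<ge> 0" using cond P(1) ec_add_E[of E X A P] unfolding s_def by auto
    have "subpartition V (insert {} P)" using P(1) unfolding subpartition_def by auto
    then have "int (e_count (E + {#X#}) A (insert {} P)) \<ge> sum h (insert {} P) - b (\<Union>(insert {} P))"
      using cond by blast
    moreover have "e_count (E + {#X#}) A (insert {} P) = e_count (E + {#X#}) A P"
      using ec_empty_set[of "E + {#X#}" A "insert {} P"] ec_empty_set[of "E + {#X#}" A P] P(2)
      by (metis Diff_insert_absorb)
    moreover have "sum h (insert {} P) = h {} + sum h P" using finP P(2) by simp
    ultimately have 2: "s P + HE X P \<ge> h {}" using ec_add_E[of E X A P] unfolding s_def by simp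
    show ?thesis using 1 2 unfolding c_def by simp
  qed
  have b: "\<exists>P. subpartition V P \<and> {} \<notin> P \<and> s P + DE (X - {x}, x) P < c" if x: "x \<in> X" for x
  proof -
    obtain P where P: "subpartition V P" and v: "int (e_count E (A + {#(X - {x}, x)#}) P) < sum h P - b (\<Union>P)"
      using neg x by force
    have finP: "finite P" using sp_finite[OF finV P] .
    define P0 where "P0 = P - {{}}"
    have sP0: "subpartition V P0" using P unfolding subpartition_def P0_def by auto
    have U: "\<Union>P0 = \<Union>P" unfolding P0_def by auto
    have ec: "e_count E (A + {#(X - {x}, x)#}) P0 = e_count E (A + {#(X - {x}, x)#}) P"
      unfolding P0_def by (rule ec_empty_set)
    have "s P0 + DE (X - {x}, x) P0 < c"
    proof (cases "{} \<in> P")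
      case True
      then have "sum h P = h {} + sum h P0" unfolding P0_def using finP
        by (metis sum.remove)
      then show ?thesis using v ec U ec_add_A[of E A "(X - {x}, x)" P0] unfolding s_def c_def by simp
    next
      case False
      then have "P0 = P" unfolding P0_def by simp
      then show ?thesis using v ec_add_A[of E A "(X - {x}, x)" P] unfolding s_def c_def by simp
    qed
    then show ?thesis using sP0 unfolding P0_def by blast
  qed
  have cc: "\<exists>P. subpartition V P \<and> {} \<notin> P \<and> s P = c - 1 \<and> HE X P = 1 \<and> x \<notin> \<Union>P" if x: "x \<in> X" for x
  proof -
    obtain P where P: "subpartition V P" "{} \<notin> P" and lt: "s P + DE (X - {x}, x) P < c"
      using b[OF x] by blast
    have ge: "s P + HE X P \<ge> c" using a[OF P] .
    have HE1: "HE X P = 1" and DE0: "DE (X - {x}, x) P = 0"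
      using ge lt HE_01[of X P] DE_01[of "(X - {x}, x)" P] by auto
    have sv: "s P = c - 1" using ge lt HE1 DE0 by simp
    have "x \<notin> \<Union>P"
    proof
      assume "x \<in> \<Union>P"
      then obtain Y' where Y': "Y' \<in> P" "x \<in> Y'" by blast
      obtain Y where Y: "Y \<in> P" "hyperedge_enters X Y" using HE1 unfolding HE_def by (auto split: if_splits)
      have "\<not> X \<subseteq> Y'"
      proof
        assume XY': "X \<subseteq> Y'"
        then have "Y \<inter> Y' \<noteq> {}" using Y(2) unfolding hyperedge_enters_def by blast
        then have "Y = Y'" using P(1) Y(1) Y'(1) unfolding subpartition_def by blast
        then show False using Y(2) XY' unfolding hyperedge_enters_def by blast
      qed
      then have "dyperedge_enters (X - {x}, x) Y'" using Y' unfolding dyperedge_enters_def by auto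
      then have "DE (X - {x}, x) P = 1" using Y'(1) unfolding DE_def by auto
      then show False using DE0 by simp
    qed
    then show ?thesis using P HE1 sv by blast
  qed
  have d: "\<exists>Q. subpartition V Q \<and> {} \<notin> Q \<and> s Q = c - 1 \<and> HE X Q = 1 \<and> S \<inter> \<Union>Q = {}"
    if "finite S" "S \<noteq> {}" "S \<subseteq> X" for S
    using that
  proof (induction S rule: finite_ne_induct)
    case (singleton x)
    then show ?case using cc[of x] by auto
  next
    case (insert x S)
    obtain Q where Q: "subpartition V Q" "{} \<notin> Q" "s Q = c - 1" "HE X Q = 1" "S \<inter> \<Union>Q = {}"
      using insert by auto
    obtain P where P: "subpartition V P" "{} \<notin> P" "s P = c - 1" "HE X P = 1" "x \<notin> \<Union>P"
      using cc[of x] insert by auto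
    obtain P' Q' where PQ: "subpartition V P'" "subpartition V Q'" "{} \<notin> P'" "{} \<notin> Q'"
      "\<Union>P' = \<Union>Q \<union> \<Union>P" "\<Union>Q' = \<Union>Q \<inter> \<Union>P"
      "sum h Q + sum h P \<le> sum h P' + sum h Q'"
      "\<forall>e. HE e P' + HE e Q' \<le> HE e Q + HE e P" "\<forall>d. DE d P' + DE d Q' \<le> DE d Q + DE d P"
      using uncross_sp[OF finV Q(1) P(1) Q(2) P(2) sup] by blast
    have UV: "\<Union>Q \<subseteq> V" "\<Union>P \<subseteq> V" using Q(1) P(1) unfolding subpartition_def by auto
    have bb: "b (\<Union>Q \<union> \<Union>P) + b (\<Union>Q \<inter> \<Union>P) \<le> b (\<Union>Q) + b (\<Union>P)"
      using sub UV unfolding submodular_def by blast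
    have ee: "int (e_count E A P') + int (e_count E A Q') \<le> int (e_count E A Q) + int (e_count E A P)"
      by (rule ec_uncross[OF PQ(8,9)])
    have sum: "s P' + s Q' \<le> s Q + s P" unfolding s_def PQ(5,6) using bb ee PQ(7) by linarith
    have aP': "s P' + HE X P' \<ge> c" using a[OF PQ(1,3)] .
    have aQ': "s Q' + HE X Q' \<ge> c" using a[OF PQ(2,4)] .
    have HQ': "HE X Q' = 1" using sum aP' aQ' Q(3) P(3) HE_01[of X P'] HE_01[of X Q'] by auto
    have sQ': "s Q' = c - 1" using sum aP' aQ' Q(3) P(3) HE_01[of X P'] HQ' by auto
    have "insert x S \<inter> \<Union>Q' = {}" using PQ(6) Q(5) P(5) by blast
    then show ?case using PQ(2,4) HQ' sQ' by blast
  qed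
  obtain Q where Q: "subpartition V Q" "HE X Q = 1" "X \<inter> \<Union>Q = {}"
    using d[OF finX Xne order_refl] by blast
  then obtain Y where "Y \<in> Q" "hyperedge_enters X Y" unfolding HE_def by (auto split: if_splits)
  then show False using Q(3) unfolding hyperedge_enters_def by blast
qed

lemma orient_le:
  assumes "\<forall>(X, x) \<in># M. x \<in> X"
  shows "size (filter_mset (\<lambda>d. \<exists>Y\<in>P. dyperedge_enters d Y) (image_mset (\<lambda>(X, x). (X - {x}, x)) M))
       \<le> size (filter_mset (\<lambda>X. \<exists>Y\<in>P. hyperedge_enters X Y) (image_mset fst M))"
  using assms
proof (induction M)
  case empty then show ?case by simp
next
  case (add p M)
  obtain X x where p: "p = (X, x)" by (cases p)
  have xX: "x \<in> X" using add.prems p by auto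
  have IH: "size (filter_mset (\<lambda>d. \<exists>Y\<in>P. dyperedge_enters d Y) (image_mset (\<lambda>(X, x). (X - {x}, x)) M))
       \<le> size (filter_mset (\<lambda>X. \<exists>Y\<in>P. hyperedge_enters X Y) (image_mset fst M))"
    using add by auto
  have imp: "(\<exists>Y\<in>P. dyperedge_enters (X - {x}, x) Y) \<Longrightarrow> (\<exists>Y\<in>P. hyperedge_enters X Y)"
    using xX unfolding dyperedge_enters_def hyperedge_enters_def by auto
  show ?case using IH imp unfolding p by auto
qed

theorem mainTheorem1:
  fixes V :: "'a set" and E :: "'a set multiset" and A :: "('a set \<times> 'a) multiset"
    and h b :: "'a set \<Rightarrow> int"
  assumes "finite V"
    and "mixed_hypergraph V E A"
    and "intersecting_supermodular V h"
    and "submodular V b"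
  shows "(\<exists>D. is_orientation E D \<and>
            (\<forall>P. subpartition V P \<longrightarrow>
               int (e_count {#} (D + A) P) \<ge> (\<Sum>X\<in>P. h X) - b (\<Union>P)))
         \<longleftrightarrow>
         (\<forall>P. subpartition V P \<longrightarrow>
               int (e_count E A P) \<ge> (\<Sum>X\<in>P. h X) - b (\<Union>P))"
proof
  assume "\<exists>D. is_orientation E D \<and>
            (\<forall>P. subpartition V P \<longrightarrow>
               int (e_count {#} (D + A) P) \<ge> (\<Sum>X\<in>P. h X) - b (\<Union>P))"
  then obtain D where D: "is_orientation E D" and c: "\<forall>P. subpartition V P \<longrightarrow>
               int (e_count {#} (D + A) P) \<ge> (\<Sum>X\<in>P. h X) - b (\<Union>P)" by blast
  obtain M where M: "image_mset fst M = E" "\<forall>(X, x) \<in># M. x \<in> X"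
     "D = image_mset (\<lambda>(X, x). (X - {x}, x)) M" using D unfolding is_orientation_def by blast
  have le: "e_count {#} (D + A) P \<le> e_count E A P" for P
    using orient_le[OF M(2), of P] unfolding e_count_def M(1,3)[symmetric] by simp
  show "\<forall>P. subpartition V P \<longrightarrow> int (e_count E A P) \<ge> (\<Sum>X\<in>P. h X) - b (\<Union>P)"
  proof (intro allI impI)
    fix P assume "subpartition V P"
    then have "int (e_count {#} (D + A) P) \<ge> (\<Sum>X\<in>P. h X) - b (\<Union>P)" using c by blast
    moreover have "int (e_count {#} (D + A) P) \<le> int (e_count E A P)" using le[of P] by simp
    ultimately show "int (e_count E A P) \<ge> (\<Sum>X\<in>P. h X) - b (\<Union>P)" by linarith
  qed
next
  have fe: "\<forall>X\<in>#E. finite X \<and> X \<noteq> {}" using assms(2) unfolding mixed_hypergraph_def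
    by (metis card.empty card.infinite not_numeral_le_zero)
  show "(\<forall>P. subpartition V P \<longrightarrow> int (e_count E A P) \<ge> (\<Sum>X\<in>P. h X) - b (\<Union>P)) \<Longrightarrow>
    (\<exists>D. is_orientation E D \<and>
            (\<forall>P. subpartition V P \<longrightarrow>
               int (e_count {#} (D + A) P) \<ge> (\<Sum>X\<in>P. h X) - b (\<Union>P)))"
    using fe
  proof (induction E arbitrary: A)
    case empty
    have "is_orientation {#} {#}" unfolding is_orientation_def by (intro exI[of _ "{#}"]) simp
    moreover have "e_count {#} ({#} + A) P = e_count {#} A P" for P by simp
    ultimately show ?case using empty by (intro exI[of _ "{#}"]) simp
  next
    case (add X E)
    have fX: "finite X" "X \<noteq> {}" using add.prems(2) by auto
    have c: "\<forall>P. subpartition V P \<longrightarrow> int (e_count (E + {#X#}) A P) \<ge> sum h P - b (\<Union>P)"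
      using add.prems(1) by simp
    obtain x where x: "x \<in> X" and c2: "\<forall>P. subpartition V P \<longrightarrow>
        int (e_count E (A + {#(X - {x}, x)#}) P) \<ge> sum h P - b (\<Union>P)"
      using orient_step[OF assms(1,3,4) fX c] by blast
    obtain D0 where D0: "is_orientation E D0" and c3: "\<forall>P. subpartition V P \<longrightarrow>
        int (e_count {#} (D0 + (A + {#(X - {x}, x)#})) P) \<ge> sum h P - b (\<Union>P)"
      using add.IH[of "A + {#(X - {x}, x)#}"] c2 add.prems(2) by auto
    obtain M0 where M0: "image_mset fst M0 = E" "\<forall>(X, x) \<in># M0. x \<in> X"
     "D0 = image_mset (\<lambda>(X, x). (X - {x}, x)) M0" using D0 unfolding is_orientation_def by blast
    have "is_orientation (add_mset X E) (add_mset (X - {x}, x) D0)"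
      unfolding is_orientation_def
      by (rule exI[of _ "add_mset (X, x) M0"]) (use M0 x in auto)
    moreover have "add_mset (X - {x}, x) D0 + A = D0 + (A + {#(X - {x}, x)#})" by simp
    ultimately show ?case using c3 by metis
  qed
qed
end
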